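(* Let $p_{XYZ}$ be the distribution in which $X$ and $Y$ are independent uniformly distributed bits and $Z=X\wedge Y$. There exists a correlated multi-secret sharing scheme for $p_{XYZ}$ with $H(M_{12})=H(M_{23})=H(M_{31})=\log 3$.
   Context: A correlated multi-secret sharing (CMSS) scheme for a joint distribution $p_{XYZ}$ on finite sets is a conditional distribution $p_{M_{12}M_{23}M_{31}|XYZ}$ mapping secrets $(X,Y,Z)\sim p_{XYZ}$ probabilistically to shares $(M_{12},M_{23},M_{31})$ such that (correctness) $H(X|M_{12},M_{31})=H(Y|M_{12},M_{23})=H(Z|M_{23},M_{31})=0$ and (privacy) $I((M_{12},M_{31});(Y,Z)|X)=0$, $I((M_{12},M_{23});(X,Z)|Y)=0$, $I((M_{23},M_{31});(X,Y)|Z)=0$. Logs base 2. *)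

theory Defs
  imports "HOL-Probability.Probability_Mass_Function"
begin

definition entropy :: "'a pmf \<Rightarrow> real" where
  "entropy p = - (\<Sum>x\<in>set_pmf p. pmf p x * log 2 (pmf p x))"

definition H :: "'w pmf \<Rightarrow> ('w \<Rightarrow> 'a) \<Rightarrow> real" where
  "H P f = entropy (map_pmf f P)"

definition condH :: "'w pmf \<Rightarrow> ('w \<Rightarrow> 'a) \<Rightarrow> ('w \<Rightarrow> 'b) \<Rightarrow> real" where
  "condH P f g = H P (\<lambda>w. (f w, g w)) - H P g"

definition condMI :: "'w pmf \<Rightarrow> ('w \<Rightarrow> 'a) \<Rightarrow> ('w \<Rightarrow> 'b) \<Rightarrow> ('w \<Rightarrow> 'c) \<Rightarrow> real" where
  "condMI P f g h = condH P f h - condH P f (\<lambda>w. (g w, h w))"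

definition cmss_joint ::
  "('x \<times> 'y \<times> 'z) pmf \<Rightarrow> ('x \<times> 'y \<times> 'z \<Rightarrow> ('m \<times> 'n \<times> 'k) pmf)
     \<Rightarrow> (('x \<times> 'y \<times> 'z) \<times> ('m \<times> 'n \<times> 'k)) pmf" where
  "cmss_joint p K = bind_pmf p (\<lambda>s. map_pmf (\<lambda>m. (s, m)) (K s))"

definition sX where "sX w = fst (fst w)"
definition sY where "sY w = fst (snd (fst w))"
definition sZ where "sZ w = snd (snd (fst w))"
definition M12 where "M12 w = fst (snd w)"
definition M23 where "M23 w = fst (snd (snd w))"
definition M31 where "M31 w = snd (snd (snd w))"

definition is_cmss ::
  "('x \<times> 'y \<times> 'z) pmf \<Rightarrow> ('x \<times> 'y \<times> 'z \<Rightarrow> ('m \<times> 'n \<times> 'k) pmf) \<Rightarrow> bool" where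
  "is_cmss p K \<longleftrightarrow>
     (\<forall>s\<in>set_pmf p. finite (set_pmf (K s))) \<and>
     (let P = cmss_joint p K in
       condH P sX (\<lambda>w. (M12 w, M31 w)) = 0 \<and>
       condH P sY (\<lambda>w. (M12 w, M23 w)) = 0 \<and>
       condH P sZ (\<lambda>w. (M23 w, M31 w)) = 0 \<and>
       condMI P (\<lambda>w. (M12 w, M31 w)) (\<lambda>w. (sY w, sZ w)) sX = 0 \<and>
       condMI P (\<lambda>w. (M12 w, M23 w)) (\<lambda>w. (sX w, sZ w)) sY = 0 \<and>
       condMI P (\<lambda>w. (M23 w, M31 w)) (\<lambda>w. (sX w, sY w)) sZ = 0)"

definition pAND :: "(bool \<times> bool \<times> bool) pmf" where
  "pAND = map_pmf (\<lambda>(x, y). (x, y, x \<and> y)) (pmf_of_set (UNIV :: (bool \<times> bool) set))"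

end

theory Submission
  imports Defs
begin

definition ent_list :: "'a list \<Rightarrow> real" where
  "ent_list vs = (\<Sum>v\<leftarrow>remdups vs. real (length (filter (\<lambda>u. u = v) vs)) / real (length vs) *
      (log 2 (real (length vs)) - log 2 (real (length (filter (\<lambda>u. u = v) vs)))))"

lemma entropy_unif_list:
  assumes "distinct ws" "ws \<noteq> []"
  shows "entropy (map_pmf g (pmf_of_set (set ws))) = ent_list (map g ws)"
proof -
  let ?A = "set ws"
  have fin: "finite ?A" and ne: "?A \<noteq> {}" using assms by auto
  have cA: "card ?A = length ws" using assms distinct_card by blast
  have pm: "pmf (map_pmf g (pmf_of_set ?A)) v = real (length (filter (\<lambda>u. u = v) (map g ws))) / real (length ws)" for v
  proof -
    have "pmf (map_pmf g (pmf_of_set ?A)) v = card (?A \<inter> g -` {v}) / card ?A"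
      using fin ne by (simp add: pmf_map measure_pmf_of_set)
    also have "card (?A \<inter> g -` {v}) = length (filter (\<lambda>w. g w = v) ws)"
      using distinct_length_filter[OF assms(1), of "\<lambda>w. g w = v"]
      by (simp add: Int_commute vimage_def)
    finally show ?thesis using cA by (simp add: filter_map o_def)
  qed
  have pos: "v \<in> g ` ?A \<Longrightarrow> 0 < length (filter (\<lambda>u. u = v) (map g ws))" for v
    by (auto simp: filter_map o_def filter_empty_conv)
  have "entropy (map_pmf g (pmf_of_set ?A)) =
     (\<Sum>v\<in>g ` ?A. real (length (filter (\<lambda>u. u = v) (map g ws))) / real (length ws) *
      (log 2 (real (length ws)) - log 2 (real (length (filter (\<lambda>u. u = v) (map g ws))))))"
    unfolding entropy_def using fin ne
    apply (simp only: pm set_map_pmf set_pmf_of_set[OF ne fin] sum_negf[symmetric])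
    apply (rule sum.cong, rule refl)
    subgoal for v using pos[of v] assms by (simp add: log_divide algebra_simps)
    done
  also have "\<dots> = ent_list (map g ws)"
    unfolding ent_list_def
    by (subst sum_list_distinct_conv_sum_set) (auto)
  finally show ?thesis .
qed

definition R :: "(nat \<times> nat) set" where "R = {0,1,2} \<times> {1,2}"

definition shares :: "bool \<times> bool \<times> bool \<Rightarrow> nat \<times> nat \<Rightarrow> nat \<times> nat \<times> nat" where
  "shares s r = (case s of (x,y,z) \<Rightarrow> case r of (r1,r2) \<Rightarrow>
     ((r1+r2) mod 3, (r1 + (if y then 1 else 2)*r2) mod 3, (if x then (r1+r2) mod 3 else r1 mod 3)))"

definition KK :: "bool \<times> bool \<times> bool \<Rightarrow> (nat \<times> nat \<times> nat) pmf" where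
  "KK s = map_pmf (shares s) (pmf_of_set R)"

definition FF :: "(bool \<times> bool) \<times> (nat \<times> nat) \<Rightarrow> (bool \<times> bool \<times> bool) \<times> (nat \<times> nat \<times> nat)" where
  "FF w = (case w of ((x,y),r) \<Rightarrow> ((x,y,x\<and>y), shares (x,y,x\<and>y) r))"

definition ws :: "((bool \<times> bool) \<times> (nat \<times> nat)) list" where
  "ws = List.product (List.product [False,True] [False,True]) (List.product [0,1,2] [1,2])"

lemma pmf_of_set_times:
  assumes "finite A" "A \<noteq> {}" "finite B" "B \<noteq> {}"
  shows "pmf_of_set (A \<times> B) = pair_pmf (pmf_of_set A) (pmf_of_set B)"
proof (rule pmf_eqI)
  fix i :: "'a \<times> 'b"
  obtain a b where i: "i = (a,b)" by (cases i)
  show "pmf (pmf_of_set (A \<times> B)) i = pmf (pair_pmf (pmf_of_set A) (pmf_of_set B)) i"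
    unfolding i pmf_pair using assms
    by (simp add: card_cartesian_product indicator_def)
qed

lemma set_ws: "set ws = UNIV \<times> R"
  by (simp only: ws_def set_product R_def UNIV_Times_UNIV[symmetric] UNIV_bool) simp

lemma distinct_ws: "distinct ws"
  unfolding ws_def by (intro distinct_product) auto

lemma joint: "cmss_joint pAND KK = map_pmf FF (pmf_of_set (set ws))"
proof -
  have "pmf_of_set (set ws) = pair_pmf (pmf_of_set UNIV) (pmf_of_set R)"
    unfolding set_ws by (rule pmf_of_set_times) (auto simp: R_def)
  then show ?thesis
    unfolding cmss_joint_def pAND_def KK_def pair_pmf_def
    apply (simp only: bind_map_pmf map_pmf_comp map_bind_pmf map_return_pmf map_pmf_def[symmetric])
    apply (rule bind_pmf_cong[OF refl])
    apply (rule map_pmf_cong[OF refl])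
    apply (auto simp: FF_def)
    done
qed

lemma H_joint: "H (cmss_joint pAND KK) f = ent_list (map (f \<circ> FF) ws)"
  unfolding H_def joint map_pmf_comp
  apply (subst entropy_unif_list)
    apply (simp_all only: o_def)
  apply (simp_all add: distinct_ws)
  apply (simp add: ws_def)
  done


lemma log2_4: "log 2 (4::real) = 2"
  using log_pow_cancel[of "2::real" 2] by simp
lemma log2_8: "log 2 (8::real) = 3"
  using log_pow_cancel[of "2::real" 3] by simp
lemma log2_6: "log 2 (6::real) = 1 + log 2 3"
  using log_mult[of 2 "2::real" 3] by simp
lemma log2_12: "log 2 (12::real) = 2 + log 2 3"
  using log_mult[of 2 "4::real" 3] log2_4 by simp
lemma log2_24: "log 2 (24::real) = 3 + log 2 3"
  using log_mult[of 2 "8::real" 3] log2_8 by simp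
lemma log2_18: "log 2 (18::real) = 1 + 2 * log 2 3"
  using log_mult[of 2 "2::real" 9] log_mult[of 2 "3::real" 3] by simp

lemmas logs = log2_18 log2_4 log2_8 log2_6 log2_12 log2_24
lemmas evs = H_joint ws_def FF_def shares_def ent_list_def sX_def sY_def sZ_def M12_def M23_def M31_def logs

lemma h12: "H (cmss_joint pAND KK) M12 = log 2 3"
  by (simp add: evs)
lemma h23: "H (cmss_joint pAND KK) M23 = log 2 3"
  by (simp add: evs)
lemma h31: "H (cmss_joint pAND KK) M31 = log 2 3"
  by (simp add: evs)

lemma c1: "condH (cmss_joint pAND KK) sX (\<lambda>w. (M12 w, M31 w)) = 0"
  unfolding condH_def by (simp add: evs)
lemma c2: "condH (cmss_joint pAND KK) sY (\<lambda>w. (M12 w, M23 w)) = 0"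
  unfolding condH_def by (simp add: evs)
lemma c3: "condH (cmss_joint pAND KK) sZ (\<lambda>w. (M23 w, M31 w)) = 0"
  unfolding condH_def by (simp add: evs)
lemma p1: "condMI (cmss_joint pAND KK) (\<lambda>w. (M12 w, M31 w)) (\<lambda>w. (sY w, sZ w)) sX = 0"
  unfolding condMI_def condH_def by (simp add: evs algebra_simps)
lemma p2: "condMI (cmss_joint pAND KK) (\<lambda>w. (M12 w, M23 w)) (\<lambda>w. (sX w, sZ w)) sY = 0"
  unfolding condMI_def condH_def by (simp add: evs algebra_simps)
lemma p3: "condMI (cmss_joint pAND KK) (\<lambda>w. (M23 w, M31 w)) (\<lambda>w. (sX w, sY w)) sZ = 0"
  unfolding condMI_def condH_def by (simp add: evs field_simps)

lemma fin: "finite (set_pmf (KK s))"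
  by (simp add: KK_def R_def)

theorem theorem12:
  shows "\<exists>K :: bool \<times> bool \<times> bool \<Rightarrow> (nat \<times> nat \<times> nat) pmf.
           is_cmss pAND K \<and>
           H (cmss_joint pAND K) M12 = log 2 3 \<and>
           H (cmss_joint pAND K) M23 = log 2 3 \<and>
           H (cmss_joint pAND K) M31 = log 2 3"
  apply (rule exI[of _ KK])
  unfolding is_cmss_def Let_def
  using fin c1 c2 c3 p1 p2 p3 h12 h23 h31 by blast

end
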